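(* Suppose that $S_N$ admits the weak global Edgeworth expansion of order $0$ for all $f\in F^1_0$, with leading polynomial $P_{0,g}\equiv1$ and asymptotic mean $A=0$, i.e. $\mathbb{E}(f(S_N))=\int\mathfrak{n}(z)f(z\sqrt{N})\,dz+C^1_0(f)\,o(N^{-1/2})$ with the $o$-term independent of $f$. Then for all $a<b$, $$\frac{\sqrt{N}}{b-a}\,\mathbb{P}\big(S_N\in(u+a,u+b)\big)=\frac{1}{\sqrt{2\pi\sigma^2}}e^{-\frac{u^2}{2N\sigma^2}}+o(1)$$ uniformly in $u\in\mathbb{R}$.
   Context: $X_1,X_2,\dots$ are real random variables, $S_N=\sum_{n=1}^N X_n$, $\sigma^2>0$, $\mathfrak{n}(y)=\frac{1}{\sqrt{2\pi\sigma^2}}e^{-y^2/(2\sigma^2)}$. $F^1_0$ is the space of continuously differentiable $f:\mathbb{R}\to\mathbb{C}$ with $C^1_0(f)=\max(\|f\|_{L^1},\|f'\|_{L^1})+\|f\|_{L^1}<\infty$. The asymptotic mean $A=\lim_N\mathbb{E}(S_N/N)$ is assumed to be $0$. *)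

theory Defs
  imports "HOL-Probability.Probability"
begin

definition gauss_dens :: "real \<Rightarrow> real \<Rightarrow> real" where
  "gauss_dens s2 y = exp (- (y^2) / (2 * s2)) / sqrt (2 * pi * s2)"

text \<open>Partial sums S_N = X_1 + ... + X_N (the sequence X is indexed from 1).\<close>
definition partial_sum :: "(nat \<Rightarrow> 'a \<Rightarrow> real) \<Rightarrow> nat \<Rightarrow> 'a \<Rightarrow> real" where
  "partial_sum X N \<omega> = (\<Sum>n=1..N. X n \<omega>)"

definition L1norm :: "(real \<Rightarrow> complex) \<Rightarrow> real" where
  "L1norm f = (LINT x|lborel. norm (f x))"

definition F10 :: "(real \<Rightarrow> complex) set" where
  "F10 = {f. f C1_differentiable_on UNIV \<and> integrable lborel f
             \<and> integrable lborel (\<lambda>x. vector_derivative f (at x))}"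

definition C10 :: "(real \<Rightarrow> complex) \<Rightarrow> real" where
  "C10 f = max (L1norm f) (L1norm (\<lambda>x. vector_derivative f (at x))) + L1norm f"

end

theory Submission
  imports Defs
begin

definition pp :: "real \<Rightarrow> real" where "pp t = (max 0 t)^2"

lemma pp_est: "\<bar>pp (t+h) - pp t - 2 * max 0 t * h\<bar> \<le> h^2"
proof -
  have s1: "0 \<le> (t+h)*(t+h)" by simp
  have s2: "0 \<le> t * t" by simp
  have s3: "0 \<le> h * h" by simp
  show ?thesis
  proof (cases "t \<ge> 0"; cases "t + h \<ge> 0")
    assume "t \<ge> 0" "t + h \<ge> 0" then show ?thesis by (simp add: pp_def power2_eq_square algebra_simps)
  next
    assume a: "t \<ge> 0" "\<not> t + h \<ge> 0"
    then have "t * (t + 2*h) \<le> 0" by (intro mult_nonneg_nonpos) auto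
    with a s1 show ?thesis by (simp add: pp_def power2_eq_square algebra_simps abs_if)
  next
    assume a: "\<not> t \<ge> 0" "t + h \<ge> 0"
    then have "t * (t + 2*h) \<le> 0" by (intro mult_nonpos_nonneg) auto
    with a s1 show ?thesis by (simp add: pp_def power2_eq_square algebra_simps abs_if)
  next
    assume a: "\<not> t \<ge> 0" "\<not> t + h \<ge> 0"
    then show ?thesis by (simp add: pp_def power2_eq_square)
  qed
qed

lemma pp_deriv: "(pp has_real_derivative (2 * max 0 t)) (at t)"
proof -
  have "((\<lambda>h. (pp (t+h) - pp t - 2 * max 0 t * h) / h) \<longlongrightarrow> 0) (at 0)"
  proof (rule Lim_null_comparison)
    show "\<forall>\<^sub>F h in at 0. norm ((pp (t+h) - pp t - 2 * max 0 t * h) / h) \<le> \<bar>h\<bar>"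
    proof (rule always_eventually, rule allI)
      fix h :: real
      show "norm ((pp (t+h) - pp t - 2 * max 0 t * h) / h) \<le> \<bar>h\<bar>"
      proof (cases "h = 0")
        case False
        have "\<bar>pp (t+h) - pp t - 2 * max 0 t * h\<bar> \<le> \<bar>h\<bar> * \<bar>h\<bar>" using pp_est[of t h]
          by (simp add: power2_eq_square abs_mult)
        then show ?thesis using False by (simp add: divide_le_eq)
      qed simp
    qed
    show "((\<lambda>h. \<bar>h\<bar>) \<longlongrightarrow> 0) (at (0::real))"
      using tendsto_rabs[OF tendsto_ident_at[of 0 UNIV]] by simp
  qed
  then have "((\<lambda>h. (pp (t+h) - pp t) / h) \<longlongrightarrow> 2 * max 0 t) (at 0)"
  proof -
    assume H: "((\<lambda>h. (pp (t+h) - pp t - 2 * max 0 t * h) / h) \<longlongrightarrow> 0) (at 0)"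
    have "((\<lambda>h. (pp (t+h) - pp t - 2 * max 0 t * h) / h + 2 * max 0 t) \<longlongrightarrow> 0 + 2 * max 0 t) (at 0)"
      by (intro tendsto_add H tendsto_const)
    moreover have "\<forall>\<^sub>F h in at 0. (pp (t+h) - pp t - 2 * max 0 t * h) / h + 2 * max 0 t = (pp (t+h) - pp t) / h"
      by (auto simp: eventually_at_filter field_simps)
    ultimately show ?thesis by (simp add: filterlim_cong[OF refl refl])  
  qed
  then show ?thesis by (simp add: DERIV_def)
qed

definition R1 :: "real \<Rightarrow> real" where "R1 s = (pp s - 2 * pp (s-1) + pp (s-2)) / 2"
definition R1' :: "real \<Rightarrow> real" where "R1' s = max 0 s - 2 * max 0 (s-1) + max 0 (s-2)"

lemma R1_deriv: "(R1 has_real_derivative R1' s) (at s)"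
proof -
  have a: "((\<lambda>s. pp (s - 1)) has_real_derivative (2 * max 0 (s-1) * 1)) (at s)"
    by (rule DERIV_chain2[OF pp_deriv]) (auto intro!: derivative_eq_intros)
  have b: "((\<lambda>s. pp (s - 2)) has_real_derivative (2 * max 0 (s-2) * 1)) (at s)"
    by (rule DERIV_chain2[OF pp_deriv]) (auto intro!: derivative_eq_intros)
  have "((\<lambda>s. (pp s - 2 * pp (s-1) + pp (s-2)) / 2) has_real_derivative
        ((2 * max 0 s - 2 * (2 * max 0 (s-1) * 1) + 2 * max 0 (s-2) * 1) / 2)) (at s)"
    by (intro DERIV_cdivide DERIV_add DERIV_diff DERIV_cmult pp_deriv a b) 
  moreover have "(2 * max 0 s - 2 * (2 * max 0 (s-1) * 1) + 2 * max 0 (s-2) * 1) / 2 = R1' s"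
    by (simp add: R1'_def)
  ultimately show ?thesis unfolding R1_def[abs_def] by simp
qed

lemma R1_le0: "s \<le> 0 \<Longrightarrow> R1 s = 0"
  by (simp add: R1_def pp_def)
lemma R1_ge2: "s \<ge> 2 \<Longrightarrow> R1 s = 1"
  by (simp add: R1_def pp_def power2_eq_square algebra_simps)
lemma R1_bounds: "0 \<le> R1 s \<and> R1 s \<le> 1"
proof -
  consider "s \<le> 0" | "0 \<le> s" "s \<le> 1" | "1 \<le> s" "s \<le> 2" | "2 \<le> s" by linarith
  then show ?thesis
  proof cases
    case 2
    then have "s * s \<le> 1 * 1" by (intro mult_mono) auto
    with 2 show ?thesis by (simp add: R1_def pp_def power2_eq_square)
  next
    case 3
    then have "(2-s) * (2-s) \<le> 1 * 1" by (intro mult_mono) auto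
    moreover have "0 \<le> (2-s) * (2-s)" by simp
    ultimately show ?thesis using 3 by (simp add: R1_def pp_def power2_eq_square algebra_simps)
  qed (auto simp: R1_le0 R1_ge2)
qed
lemma R1'_zero: "s \<le> 0 \<or> s \<ge> 2 \<Longrightarrow> R1' s = 0"
  by (auto simp: R1'_def)
lemma R1'_cont: "continuous_on UNIV R1'"
  unfolding R1'_def[abs_def] by (intro continuous_intros)

definition T :: "real \<Rightarrow> real \<Rightarrow> real \<Rightarrow> real" where
  "T d L x = R1 (x/d) - R1 ((x-L)/d)"
definition T' :: "real \<Rightarrow> real \<Rightarrow> real \<Rightarrow> real" where
  "T' d L x = (R1' (x/d) - R1' ((x-L)/d)) / d"

lemma T_deriv: assumes "d > 0" shows "(T d L has_real_derivative T' d L x) (at x)"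
proof -
  have "((\<lambda>x. R1 (x/d) - R1 ((x-L)/d)) has_real_derivative
         (R1' (x/d) * (1/d) - R1' ((x-L)/d) * (1/d))) (at x)"
  proof (intro DERIV_diff)
    show "((\<lambda>x. R1 (x/d)) has_real_derivative R1' (x/d) * (1/d)) (at x)"
      by (rule DERIV_chain2[OF R1_deriv]) (use assms in \<open>auto intro!: derivative_eq_intros\<close>)
    show "((\<lambda>x. R1 ((x-L)/d)) has_real_derivative R1' ((x-L)/d) * (1/d)) (at x)"
      by (rule DERIV_chain2[OF R1_deriv]) (use assms in \<open>auto intro!: derivative_eq_intros\<close>)
  qed
  then show ?thesis unfolding T_def[abs_def] T'_def using assms by (simp add: field_simps)
qed

lemma T'_cont: "d > 0 \<Longrightarrow> continuous_on UNIV (T' d L)"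
  unfolding T'_def[abs_def]
  by (intro continuous_intros continuous_on_compose2[OF R1'_cont]) auto

lemma T_cont: "d > 0 \<Longrightarrow> continuous_on UNIV (T d L)"
  using T_deriv by (meson DERIV_isCont continuous_at_imp_continuous_on)

context fixes d L :: real assumes d: "d > 0" and L: "L \<ge> 2 * d"
begin
lemma T_bounds: "0 \<le> T d L x \<and> T d L x \<le> 1"
proof (cases "x \<le> L")
  case True
  then have "(x-L)/d \<le> 0" using d by (simp add: divide_nonpos_pos)
  then show ?thesis using R1_bounds[of "x/d"] by (simp add: T_def R1_le0)
next
  case False
  then have "x/d \<ge> 2" using d L by (simp add: le_divide_eq)
  then show ?thesis using R1_bounds[of "(x-L)/d"] by (simp add: T_def R1_ge2)
qed

lemma T_out: "x \<le> 0 \<or> x \<ge> L + 2*d \<Longrightarrow> T d L x = 0"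
proof (elim disjE)
  assume "x \<le> 0"
  then have "x/d \<le> 0" "(x-L)/d \<le> 0" using d L by (simp_all add: divide_nonpos_pos)
  then show ?thesis by (simp add: T_def R1_le0)
next
  assume "x \<ge> L + 2*d"
  then have "x/d \<ge> 2" "(x-L)/d \<ge> 2" using d L by (simp_all add: le_divide_eq)
  then show ?thesis by (simp add: T_def R1_ge2)
qed

lemma T_plateau: "2*d \<le> x \<Longrightarrow> x \<le> L \<Longrightarrow> T d L x = 1"
proof -
  assume "2*d \<le> x" "x \<le> L"
  then have "x/d \<ge> 2" "(x-L)/d \<le> 0" using d by (simp_all add: le_divide_eq divide_nonpos_pos)
  then show ?thesis by (simp add: T_def R1_ge2 R1_le0)
qed

lemma T'_out: "x \<le> 0 \<or> x \<ge> L + 2*d \<Longrightarrow> T' d L x = 0"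
proof (elim disjE)
  assume "x \<le> 0"
  then have "x/d \<le> 0" "(x-L)/d \<le> 0" using d L by (simp_all add: divide_nonpos_pos)
  then show ?thesis by (simp add: T'_def R1'_zero)
next
  assume "x \<ge> L + 2*d"
  then have "x/d \<ge> 2" "(x-L)/d \<ge> 2" using d L by (simp_all add: le_divide_eq)
  then show ?thesis by (simp add: T'_def R1'_zero)
qed
end

definition TC :: "real \<Rightarrow> real \<Rightarrow> real \<Rightarrow> real \<Rightarrow> complex" where
  "TC d L c x = complex_of_real (T d L (x - c))"

context fixes d L :: real assumes d: "d > 0" and L: "L \<ge> 2 * d"
begin

lemma TC_deriv: "(TC d L c has_vector_derivative complex_of_real (T' d L (x - c))) (at x)"
proof -
  have "((\<lambda>x. T d L (x - c)) has_real_derivative T' d L (x - c) * 1) (at x)"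
    by (rule DERIV_chain2[OF T_deriv[OF d]]) (auto intro!: derivative_eq_intros)
  then show ?thesis unfolding TC_def[abs_def] by (simp add: has_vector_derivative_of_real)
qed

lemma TC_vd: "vector_derivative (TC d L c) (at x) = complex_of_real (T' d L (x - c))"
  by (rule vector_derivative_at[OF TC_deriv])

lemma TC_cont: "continuous_on UNIV (TC d L c)"
  unfolding TC_def[abs_def]
  by (intro continuous_intros continuous_on_compose2[OF T_cont[OF d]]) auto

lemma TR'_cont: "continuous_on UNIV (\<lambda>x. T' d L (x - c))"
  by (intro continuous_intros continuous_on_compose2[OF T'_cont[OF d]]) auto
lemma TC'_cont: "continuous_on UNIV (\<lambda>x. complex_of_real (T' d L (x - c)))"
  by (intro continuous_intros TR'_cont)

lemma TC_integrable: "integrable lborel (TC d L c)"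
proof -
  have "integrable lborel (\<lambda>x. indicat_real {c..c+L+2*d} x *\<^sub>R TC d L c x)"
    by (rule borel_integrable_compact) (auto intro: continuous_on_subset[OF TC_cont])
  moreover have "(\<lambda>x. indicat_real {c..c+L+2*d} x *\<^sub>R TC d L c x) = TC d L c"
    by (rule ext) (auto simp: indicator_def TC_def T_out[OF d L])
  ultimately show ?thesis by simp
qed

lemma TC'_integrable: "integrable lborel (\<lambda>x. complex_of_real (T' d L (x - c)))"
proof -
  have "integrable lborel (\<lambda>x. indicat_real {c..c+L+2*d} x *\<^sub>R complex_of_real (T' d L (x - c)))"
    by (rule borel_integrable_compact) (auto intro: continuous_on_subset[OF TR'_cont])
  moreover have "(\<lambda>x. indicat_real {c..c+L+2*d} x *\<^sub>R complex_of_real (T' d L (x - c)))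
      = (\<lambda>x. complex_of_real (T' d L (x - c)))"
    by (rule ext) (auto simp: indicator_def T'_out[OF d L])
  ultimately show ?thesis by simp
qed

lemma TC_F10: "TC d L c \<in> F10"
  unfolding F10_def C1_differentiable_on_def
proof (intro CollectI conjI exI)
  show "\<forall>x\<in>UNIV. (TC d L c has_vector_derivative complex_of_real (T' d L (x - c))) (at x)"
    using TC_deriv by auto
  show "continuous_on UNIV (\<lambda>x. complex_of_real (T' d L (x - c)))" by (rule TC'_cont)
  show "integrable lborel (TC d L c)" by (rule TC_integrable)
  show "integrable lborel (\<lambda>x. vector_derivative (TC d L c) (at x))"
    unfolding TC_vd by (rule TC'_integrable)
qed

lemma TC_C10: "C10 (TC d L c) = C10 (TC d L 0)"
proof -
  have 1: "L1norm (TC d L c) = L1norm (TC d L 0)"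
    unfolding L1norm_def
    using lborel_integral_real_affine[where c=1 and t=c and f="\<lambda>x. norm (TC d L c x)"]
    by (simp add: TC_def)
  have 2: "L1norm (\<lambda>x. vector_derivative (TC d L c) (at x)) = L1norm (\<lambda>x. vector_derivative (TC d L 0) (at x))"
    unfolding L1norm_def TC_vd
    using lborel_integral_real_affine[where c=1 and t=c and f="\<lambda>x. norm (complex_of_real (T' d L (x - c)))"]
    by simp
  show ?thesis unfolding C10_def 1 2 ..
qed
end


lemma gauss_nonneg: "v > 0 \<Longrightarrow> 0 \<le> gauss_dens v y"
  by (simp add: gauss_dens_def)

lemma gauss_le: assumes "v > 0" shows "gauss_dens v y \<le> 1 / sqrt (2*pi* v)"
proof -
  have "exp (- (y^2) / (2 * v)) \<le> 1" using assms by (simp add: divide_nonpos_pos)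
  then show ?thesis unfolding gauss_dens_def using assms by (simp add: divide_right_mono)
qed

lemma gauss_deriv: assumes "v > 0"
  shows "(gauss_dens v has_real_derivative (- (y / v) * gauss_dens v y)) (at y)"
proof -
  have "((\<lambda>y. exp (- (y^2) / (2 * v)) / sqrt (2 * pi * v)) has_real_derivative
        (exp (- (y^2) / (2 * v)) * (- (2 * y ^ 1 * 1) / (2 * v))) / sqrt (2 * pi * v)) (at y)"
    by (intro DERIV_cdivide DERIV_fun_exp DERIV_cdivide DERIV_minus) (auto intro!: derivative_eq_intros)
  then show ?thesis unfolding gauss_dens_def[abs_def] using assms by (simp add: field_simps)
qed

lemma abs_exp_bound: fixes v y :: real assumes "v > 0" shows "\<bar>y\<bar> * exp (- (y^2) / (2 * v)) \<le> 1 + 2 * v"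
proof -
  define q where "q = y^2 / (2* v)"
  have q0: "q \<ge> 0" using assms by (simp add: q_def)
  have "1 + q \<le> exp q" by (rule exp_ge_add_one_self)
  then have e: "exp (- q) * (1 + q) \<le> 1"
    by (metis exp_minus_inverse mult.commute mult_left_mono exp_ge_zero)
  have "\<bar>y\<bar> \<le> (1 + 2* v) * (1 + q)"
  proof (cases "\<bar>y\<bar> \<le> 1")
    case True
    have "1 \<le> (1 + 2* v) * (1 + q)" using assms q0
      using mult_mono[of 1 "1+2 * v" 1 "1+q"] by simp
    then show ?thesis using True by linarith
  next
    case False
    then have "\<bar>y\<bar> * 1 \<le> \<bar>y\<bar> * \<bar>y\<bar>" by (intro mult_left_mono) auto
    then have "\<bar>y\<bar> \<le> \<bar>y\<bar> * \<bar>y\<bar>" by simp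
    also have "\<dots> = y^2" by (simp add: power2_eq_square abs_mult_self_eq)
    also have "\<dots> = 2* v * q" using assms by (simp add: q_def)
    also have "\<dots> \<le> (1 + 2* v) * (1 + q)" using assms q0 by (simp add: algebra_simps)
    finally show ?thesis .
  qed
  then have "\<bar>y\<bar> * exp (-q) \<le> (1 + 2* v) * (1 + q) * exp (-q)"
    by (rule mult_right_mono) simp
  also have "\<dots> = (1 + 2* v) * ((1 + q) * exp (-q))" by simp
  also have "\<dots> \<le> (1 + 2* v) * 1" using e assms by (intro mult_left_mono) (auto simp: mult.commute)
  finally show ?thesis by (simp add: q_def)
qed

definition Lg :: "real \<Rightarrow> real" where "Lg v = (1 + 2* v) / v * (1 / sqrt (2*pi* v))"

lemma Lg_nonneg: "v > 0 \<Longrightarrow> 0 \<le> Lg v" by (simp add: Lg_def)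

lemma gauss_deriv_bound: assumes "v > 0" shows "\<bar>- (y / v) * gauss_dens v y\<bar> \<le> Lg v"
proof -
  have "\<bar>- (y / v) * gauss_dens v y\<bar> = (\<bar>y\<bar> * exp (- (y^2) / (2 * v))) / v * (1 / sqrt (2*pi* v))"
    using assms by (simp add: gauss_dens_def abs_mult)
  also have "\<dots> \<le> (1 + 2* v) / v * (1 / sqrt (2*pi* v))"
    using abs_exp_bound[OF assms, of y] assms by (intro mult_right_mono divide_right_mono) auto
  finally show ?thesis by (simp add: Lg_def)
qed

lemma gauss_lip: assumes "v > 0" shows "\<bar>gauss_dens v y1 - gauss_dens v y2\<bar> \<le> Lg v * \<bar>y1 - y2\<bar>"
proof -
  have main: "\<bar>gauss_dens v b - gauss_dens v a\<bar> \<le> Lg v * \<bar>b - a\<bar>" if ab: "a < b" for a b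
  proof -
    obtain z where "gauss_dens v b - gauss_dens v a = (b - a) * (- (z / v) * gauss_dens v z)"
      using MVT2[OF ab, of "gauss_dens v" "\<lambda>y. - (y / v) * gauss_dens v y"] gauss_deriv[OF assms] by blast
    then have "\<bar>gauss_dens v b - gauss_dens v a\<bar> = \<bar>b - a\<bar> * \<bar>- (z / v) * gauss_dens v z\<bar>"
      by (simp add: abs_mult)
    also have "\<dots> \<le> \<bar>b - a\<bar> * Lg v" by (intro mult_left_mono gauss_deriv_bound assms) auto
    finally show ?thesis by (simp add: mult.commute)
  qed
  consider "y1 < y2" | "y1 = y2" | "y2 < y1" by linarith
  then show ?thesis
  proof cases
    case 1 then show ?thesis using main[OF 1] by (simp add: abs_minus_commute)
  next
    case 3 then show ?thesis using main[OF 3] by (simp add: abs_minus_commute)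
  qed simp
qed


lemma gauss_cont: "v > 0 \<Longrightarrow> continuous_on UNIV (gauss_dens v)"
  unfolding gauss_dens_def[abs_def] by (intro continuous_intros) auto

lemma Icc_scale: fixes s p q z :: real shows "s > 0 \<Longrightarrow> (z \<in> {p/s..q/s}) = (z * s \<in> {p..q})"
  using pos_divide_le_eq[of s p z] pos_le_divide_eq[of s z q] by auto

context
  fixes v s u p0 q0 :: real and h :: "real \<Rightarrow> real"
  assumes v: "v > 0" and s: "s > 0" and hc: "continuous_on UNIV h"
    and hb: "\<And>x. 0 \<le> h x \<and> h x \<le> 1"
    and hs: "\<And>x. x \<notin> {p0..q0} \<Longrightarrow> h x = 0"
begin

lemma gh_integrable: "integrable lborel (\<lambda>z. gauss_dens v z * h (z * s))"
proof -
  have c: "continuous_on UNIV (\<lambda>z. gauss_dens v z * h (z * s))"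
    by (intro continuous_intros gauss_cont[OF v] continuous_on_compose2[OF hc]) auto
  have "integrable lborel (\<lambda>z. indicat_real {p0/s..q0/s} z *\<^sub>R (gauss_dens v z * h (z * s)))"
    by (rule borel_integrable_compact) (auto intro: continuous_on_subset[OF c])
  moreover have "(\<lambda>z. indicat_real {p0/s..q0/s} z *\<^sub>R (gauss_dens v z * h (z * s)))
     = (\<lambda>z. gauss_dens v z * h (z * s))"
    by (rule ext) (auto simp: indicator_def Icc_scale[OF s] hs simp del: atLeastAtMost_iff)
  ultimately show ?thesis by simp
qed

lemma gauss_near:
  assumes "z * s \<in> {p..q}" "\<forall>x\<in>{p..q}. \<bar>x - u\<bar> \<le> W"
  shows "\<bar>gauss_dens v z - gauss_dens v (u/s)\<bar> \<le> Lg v * W / s"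
proof -
  have "\<bar>z * s - u\<bar> \<le> W" using assms by auto
  then have "\<bar>z - u/s\<bar> * s \<le> W" using s
    by (metis abs_of_pos diff_divide_eq_iff less_irrefl abs_mult mult.commute nonzero_mult_div_cancel_left times_divide_eq_right eq_divide_eq)
  then have w: "\<bar>z - u/s\<bar> \<le> W / s" using s by (simp add: le_divide_eq)
  have "\<bar>gauss_dens v z - gauss_dens v (u/s)\<bar> \<le> Lg v * \<bar>z - u/s\<bar>" by (rule gauss_lip[OF v])
  also have "\<dots> \<le> Lg v * (W / s)" using w Lg_nonneg[OF v] by (intro mult_left_mono) auto
  finally show ?thesis by simp
qed

lemma gh_upper:
  assumes "p0 \<le> q0" "\<forall>x\<in>{p0..q0}. \<bar>x - u\<bar> \<le> W"
  shows "(LINT z|lborel. gauss_dens v z * h (z * s)) \<le> (q0 - p0) / s * (gauss_dens v (u/s) + Lg v * W / s)"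
proof -
  define M where "M = gauss_dens v (u/s) + Lg v * W / s"
  have "(LINT z|lborel. gauss_dens v z * h (z * s)) \<le> (LINT z|lborel. indicat_real {p0/s..q0/s} z * M)"
  proof (rule integral_mono[OF gh_integrable])
    show "integrable lborel (\<lambda>z. indicat_real {p0/s..q0/s} z * M)"
      by (intro integrable_mult_left) (simp add: integrable_indicator_iff emeasure_lborel_Icc_eq)
    fix z :: real
    show "gauss_dens v z * h (z * s) \<le> indicat_real {p0/s..q0/s} z * M"
    proof (cases "z * s \<in> {p0..q0}")
      case True
      have "gauss_dens v z * h (z * s) \<le> gauss_dens v z * 1"
        using hb[of "z * s"] gauss_nonneg[OF v] by (intro mult_left_mono) auto
      also have "\<dots> \<le> M" using gauss_near[OF True assms(2)] by (simp add: M_def)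
      finally show ?thesis using True Icc_scale[OF s] by (simp add: indicator_def)
    next
      case False
      then show ?thesis using Icc_scale[OF s, of z p0 q0] hs[OF False] by (auto simp: indicator_def)
    qed
  qed
  also have "\<dots> = (q0/s - p0/s) * M"
    using assms s by (simp add: integral_mult_left_zero divide_right_mono)
  finally show ?thesis by (simp add: M_def diff_divide_distrib)
qed

lemma gh_lower:
  assumes "p \<le> q" "\<forall>x\<in>{p..q}. \<bar>x - u\<bar> \<le> W" "\<And>x. x \<in> {p..q} \<Longrightarrow> h x = 1"
  shows "(q - p) / s * (gauss_dens v (u/s) - Lg v * W / s) \<le> (LINT z|lborel. gauss_dens v z * h (z * s))"
proof -
  define m where "m = gauss_dens v (u/s) - Lg v * W / s"
  have "(LINT z|lborel. indicat_real {p/s..q/s} z * m) \<le> (LINT z|lborel. gauss_dens v z * h (z * s))"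
  proof (rule integral_mono[OF _ gh_integrable])
    show "integrable lborel (\<lambda>z. indicat_real {p/s..q/s} z * m)"
      by (intro integrable_mult_left) (simp add: integrable_indicator_iff emeasure_lborel_Icc_eq)
    fix z :: real
    show "indicat_real {p/s..q/s} z * m \<le> gauss_dens v z * h (z * s)"
    proof (cases "z * s \<in> {p..q}")
      case True
      have "m \<le> gauss_dens v z" using gauss_near[OF True assms(2)] by (simp add: m_def)
      then show ?thesis using True Icc_scale[OF s] assms(3)[OF True] by (simp add: indicator_def)
    next
      case False
      then show ?thesis using Icc_scale[OF s, of z p q] hb[of "z * s"] gauss_nonneg[OF v, of z]
        by (auto simp: indicator_def)
    qed
  qed
  moreover have "(LINT z|lborel. indicat_real {p/s..q/s} z * m) = (q/s - p/s) * m"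
    using assms s by (simp add: integral_mult_left_zero divide_right_mono)
  ultimately have "(q/s - p/s) * m \<le> (LINT z|lborel. gauss_dens v z * h (z * s))" by linarith
  then show ?thesis by (simp add: m_def diff_divide_distrib)
qed
end


lemma final_alg:
  fixes B dd s g0 G Lam KU KD rs P e :: real
  assumes B: "B > 0" and s: "s > 0" and dd: "dd > 0" "4*dd \<le> B"
    and g0: "0 \<le> g0" "g0 \<le> G" and Lam: "0 \<le> Lam"
    and up: "s * P \<le> (B+4*dd)*(g0+Lam/s) + KU*rs"
    and lo: "(B-4*dd)*(g0-Lam/s) - KD*rs \<le> s*P"
    and c1: "4*dd*G \<le> e*B/3"
    and c2: "(B+4*dd)*Lam/s \<le> e*B/3"
    and c3: "\<bar>KU*rs\<bar> \<le> e*B/3" "\<bar>KD*rs\<bar> \<le> e*B/3"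
  shows "\<bar>s/B*P - g0\<bar> \<le> e"
proof -
  define X where "X = (B-4*dd)*Lam/s"
  define Y where "Y = (B+4*dd)*Lam/s"
  define Zu where "Zu = (B+4*dd)*(g0+Lam/s)"
  define Zl where "Zl = (B-4*dd)*(g0-Lam/s)"
  define D where "D = 4*dd*g0"
  define DG where "DG = 4*dd*G"
  define U where "U = KU*rs"
  define V where "V = KD*rs"
  define SP where "SP = s*P"
  define BG where "BG = B*g0"
  have e1: "Zu = BG + D + Y" unfolding Zu_def BG_def D_def Y_def by (simp add: algebra_simps add_divide_distrib)
  have e2: "Zl = BG - D - X" unfolding Zl_def BG_def D_def X_def by (simp add: algebra_simps diff_divide_distrib)
  have f1: "D \<le> DG" unfolding D_def DG_def using g0 dd by (intro mult_left_mono) auto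
  have f2: "X \<le> Y" unfolding X_def Y_def using dd Lam s
    by (intro divide_right_mono mult_right_mono) auto
  have g1: "U \<le> e*B/3" using c3(1) unfolding U_def by (rule abs_le_D1)
  have g2: "V \<le> e*B/3" using c3(2) unfolding V_def by (rule abs_le_D1)
  have up': "SP \<le> Zu + U" using up unfolding SP_def Zu_def U_def .
  have lo': "Zl - V \<le> SP" using lo unfolding SP_def Zl_def V_def .
  have c1': "DG \<le> e*B/3" using c1 unfolding DG_def .
  have c2': "Y \<le> e*B/3" using c2 unfolding Y_def .
  have h1: "SP - BG \<le> e*B" using up' e1 f1 c1' c2' g1 by linarith
  have h2: "- (SP - BG) \<le> e*B" using lo' e2 f1 f2 c1' c2' g2 by linarith
  have "\<bar>s*P - B*g0\<bar> \<le> e*B" using h1 h2 unfolding SP_def BG_def by (simp add: abs_le_iff)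
  then have "\<bar>s*P - B*g0\<bar> / B \<le> e" using B by (simp add: divide_le_eq)
  moreover have "\<bar>s*P - B*g0\<bar> / B = \<bar>(s*P - B*g0) / B\<bar>" using B by simp
  moreover have "(s*P - B*g0) / B = s/B*P - g0" using B by (simp add: field_simps)
  ultimately show ?thesis by simp
qed

lemma inv_sqrt_lim: "((\<lambda>N. 1 / sqrt (real N)) \<longlongrightarrow> 0) sequentially"
  by (intro tendsto_divide_0[OF tendsto_const] filterlim_at_top_imp_at_infinity filterlim_compose[OF sqrt_at_top filterlim_real_sequentially])

context
  fixes M :: "'a measure" and Y :: "'a \<Rightarrow> real"
  assumes P: "prob_space M" and Y: "Y \<in> borel_measurable M"
begin

lemma h_integrable:
  assumes "continuous_on UNIV h" "\<And>x. 0 \<le> h x \<and> h x \<le> (1::real)"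
  shows "integrable M (\<lambda>\<omega>. h (Y \<omega>))"
proof -
  interpret prob_space M by (rule P)
  show ?thesis
  proof (rule integrable_const_bound[where B=1])
    show "AE x in M. norm (h (Y x)) \<le> 1" using assms(2) by auto
    show "(\<lambda>\<omega>. h (Y \<omega>)) \<in> borel_measurable M"
      using measurable_compose[OF Y borel_measurable_continuous_onI[OF assms(1)]] by (simp add: o_def)
  qed
qed

lemma ind_integrable:
  assumes "A \<in> sets borel"
  shows "integrable M (\<lambda>\<omega>. indicat_real A (Y \<omega>))"
proof -
  interpret prob_space M by (rule P)
  show ?thesis
  proof (rule integrable_const_bound[where B=1])
    show "AE x in M. norm (indicat_real A (Y x)) \<le> 1" by (auto simp: indicator_def)
    show "(\<lambda>\<omega>. indicat_real A (Y \<omega>)) \<in> borel_measurable M"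
      using measurable_compose[OF Y borel_measurable_indicator[OF assms]] by (simp add: o_def)
  qed
qed

lemma prob_as_int: "measure M {\<omega>\<in>space M. Y \<omega> \<in> A} = (LINT \<omega>|M. indicat_real A (Y \<omega>))"
proof -
  have "measure M {\<omega>\<in>space M. Y \<omega> \<in> A} = (LINT \<omega>|M. indicat_real {\<omega>\<in>space M. Y \<omega> \<in> A} \<omega>)"
    by (simp add: integral_indicator Int_absorb2 subset_iff)
  also have "\<dots> = (LINT \<omega>|M. indicat_real A (Y \<omega>))"
    by (rule Bochner_Integration.integral_cong) (auto simp: indicator_def)
  finally show ?thesis .
qed

lemma prob_le_int:
  assumes "A \<in> sets borel" "continuous_on UNIV h" "\<And>x. 0 \<le> h x \<and> h x \<le> (1::real)"
    "\<And>x. indicat_real A x \<le> h x"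
  shows "measure M {\<omega>\<in>space M. Y \<omega> \<in> A} \<le> (LINT \<omega>|M. h (Y \<omega>))"
  unfolding prob_as_int
  by (rule integral_mono[OF ind_integrable[OF assms(1)] h_integrable[OF assms(2,3)]]) (use assms(4) in auto)

lemma int_le_prob:
  assumes "A \<in> sets borel" "continuous_on UNIV h" "\<And>x. 0 \<le> h x \<and> h x \<le> (1::real)"
    "\<And>x. h x \<le> indicat_real A x"
  shows "(LINT \<omega>|M. h (Y \<omega>)) \<le> measure M {\<omega>\<in>space M. Y \<omega> \<in> A}"
  unfolding prob_as_int
  by (rule integral_mono[OF h_integrable[OF assms(2,3)] ind_integrable[OF assms(1)]]) (use assms(4) in auto)
end


theorem corollary5p1:
  fixes M :: "'a measure" and X :: "nat \<Rightarrow> 'a \<Rightarrow> real" and sigma2 :: real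
  assumes "prob_space M"
    and "\<And>n. X n \<in> borel_measurable M"
    and "\<And>n. integrable M (X n)"
    and "sigma2 > 0"
    and "(\<lambda>N. (LINT \<omega>|M. partial_sum X N \<omega>) / real N) \<longlonglongrightarrow> 0"
    and "\<exists>r :: nat \<Rightarrow> real. ((\<lambda>N. r N * sqrt (real N)) \<longlonglongrightarrow> 0) \<and>
           (\<forall>\<^sub>F N in sequentially. \<forall>f\<in>F10.
              cmod ((LINT \<omega>|M. f (partial_sum X N \<omega>))
                    - (LINT z|lborel. complex_of_real (gauss_dens sigma2 z) * f (z * sqrt (real N))))
              \<le> C10 f * r N)"
    and "a < b"
  shows "\<forall>e>0. \<forall>\<^sub>F N in sequentially. \<forall>u::real.
           \<bar>sqrt (real N) / (b - a) * measure M {\<omega>\<in>space M. partial_sum X N \<omega> \<in> {u+a<..<u+b}}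
            - exp (- (u^2) / (2 * real N * sigma2)) / sqrt (2 * pi * sigma2)\<bar> \<le> e"
proof (intro allI impI)
  fix e :: real assume e: "e > 0"
  have v: "sigma2 > 0" by (rule assms(4))
  obtain r where r1: "(\<lambda>N. r N * sqrt (real N)) \<longlonglongrightarrow> 0" and
    r2: "\<forall>\<^sub>F N in sequentially. \<forall>f\<in>F10.
              cmod ((LINT \<omega>|M. f (partial_sum X N \<omega>))
                    - (LINT z|lborel. complex_of_real (gauss_dens sigma2 z) * f (z * sqrt (real N))))
              \<le> C10 f * r N" using assms(6) by blast
  define B where "B = b - a"
  define G where "G = 1 / sqrt (2 * pi * sigma2)"
  have B: "B > 0" using assms(7) by (simp add: B_def)
  have G: "G > 0" using v by (simp add: G_def)
  define dd where "dd = min (B/4) (e*B/(12*G))"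
  have dd: "dd > 0" using B G e by (simp add: dd_def)
  have dd4: "4*dd \<le> B" by (simp add: dd_def)
  have c1: "4*dd*G \<le> e*B/3"
  proof -
    have "dd \<le> e*B/(12*G)" by (simp add: dd_def)
    then have "dd * G \<le> e*B/(12*G) * G" using G by (intro mult_right_mono) auto
    also have "\<dots> = e*B/12" using G by simp
    finally show ?thesis by simp
  qed
  define LU where "LU = B + 2*dd"
  define LD where "LD = B - 2*dd"
  have LU: "LU \<ge> 2*dd" using B by (simp add: LU_def)
  have LD: "LD \<ge> 2*dd" using dd4 by (simp add: LD_def)
  define KU where "KU = C10 (TC dd LU 0)"
  define KD where "KD = C10 (TC dd LD 0)"
  define W where "W = \<bar>a\<bar> + \<bar>b\<bar> + 2*dd"
  define Lam where "Lam = Lg sigma2 * W"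
  have Lam: "Lam \<ge> 0" using Lg_nonneg[OF v] dd by (simp add: Lam_def W_def)
  define eps1 where "eps1 = e*B/(3*(\<bar>KU\<bar>+\<bar>KD\<bar>+1))"
  define eps2 where "eps2 = e*B/(3*((B+4*dd)*Lam+1))"
  have eps1: "eps1 > 0" using e B by (simp add: eps1_def add_pos_nonneg)
  have "0 \<le> (B+4*dd)*Lam" using B dd Lam by simp
  then have eps2: "eps2 > 0" using e B unfolding eps2_def by (intro divide_pos_pos) auto
  have ev1: "\<forall>\<^sub>F N in sequentially. \<bar>r N * sqrt (real N)\<bar> < eps1"
    using r1 eps1 by (auto simp: tendsto_iff dist_real_def)
  have ev2: "\<forall>\<^sub>F N in sequentially. \<bar>1 / sqrt (real N)\<bar> < eps2"
    using inv_sqrt_lim eps2 by (auto simp: tendsto_iff dist_real_def)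
  have ev3: "\<forall>\<^sub>F N in sequentially. N \<ge> (1::nat)" by (rule eventually_ge_at_top)
  show "\<forall>\<^sub>F N in sequentially. \<forall>u::real.
           \<bar>sqrt (real N) / (b - a) * measure M {\<omega>\<in>space M. partial_sum X N \<omega> \<in> {u+a<..<u+b}}
            - exp (- (u^2) / (2 * real N * sigma2)) / sqrt (2 * pi * sigma2)\<bar> \<le> e"
    using eventually_conj[OF r2 eventually_conj[OF ev1 eventually_conj[OF ev2 ev3]]]
  proof (rule eventually_mono, elim conjE, intro allI)
    fix N :: nat and u :: real
    assume hN: "\<forall>f\<in>F10.
              cmod ((LINT \<omega>|M. f (partial_sum X N \<omega>))
                    - (LINT z|lborel. complex_of_real (gauss_dens sigma2 z) * f (z * sqrt (real N))))
              \<le> C10 f * r N"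
      and h1: "\<bar>r N * sqrt (real N)\<bar> < eps1" and h2: "\<bar>1 / sqrt (real N)\<bar> < eps2" and h3: "N \<ge> 1"
    define s where "s = sqrt (real N)"
    have s: "s > 0" using h3 by (simp add: s_def)
    define S where "S = partial_sum X N"
    have Smeas: "S \<in> borel_measurable M"
      unfolding S_def partial_sum_def[abs_def] by (intro borel_measurable_sum assms(2))
    define g0 where "g0 = gauss_dens sigma2 (u/s)"
    have g0: "0 \<le> g0" "g0 \<le> G" using gauss_nonneg[OF v] gauss_le[OF v] by (auto simp: g0_def G_def)
    have g0eq: "g0 = exp (- (u^2) / (2 * real N * sigma2)) / sqrt (2 * pi * sigma2)"
      using h3 by (simp add: g0_def gauss_dens_def s_def power_divide)
    define P where "P = measure M {\<omega>\<in>space M. S \<omega> \<in> {u+a<..<u+b}}"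
    have hyp: "\<bar>(LINT \<omega>|M. T dd L (S \<omega> - c)) - (LINT z|lborel. gauss_dens sigma2 z * T dd L (z * s - c))\<bar>
               \<le> C10 (TC dd L 0) * r N" if L: "L \<ge> 2*dd" for L c
    proof -
      have "cmod ((LINT \<omega>|M. TC dd L c (S \<omega>))
                    - (LINT z|lborel. complex_of_real (gauss_dens sigma2 z) * TC dd L c (z * s)))
              \<le> C10 (TC dd L c) * r N" using hN TC_F10[OF dd L] by (auto simp: S_def s_def)
      moreover have "(LINT \<omega>|M. TC dd L c (S \<omega>)) = complex_of_real (LINT \<omega>|M. T dd L (S \<omega> - c))"
        unfolding TC_def by (rule integral_complex_of_real)
      moreover have "(LINT z|lborel. complex_of_real (gauss_dens sigma2 z) * TC dd L c (z * s))
          = complex_of_real (LINT z|lborel. gauss_dens sigma2 z * T dd L (z * s - c))"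
        unfolding TC_def of_real_mult[symmetric] by (rule integral_complex_of_real)
      ultimately show ?thesis using TC_C10[OF dd L, of c]
        by (simp add: of_real_diff[symmetric] del: of_real_diff)
    qed
    have Wbound: "\<bar>x - u\<bar> \<le> W" if "u + a - 2*dd \<le> x" "x \<le> u + b + 2*dd" for x
      using that dd abs_ge_self[of a] abs_ge_minus_self[of a] abs_ge_self[of b] abs_ge_minus_self[of b]
      unfolding W_def by (simp add: abs_le_iff)
    define cU where "cU = u + a - 2*dd"
    define EU where "EU = (LINT \<omega>|M. T dd LU (S \<omega> - cU))"
    define JU where "JU = (LINT z|lborel. gauss_dens sigma2 z * T dd LU (z * s - cU))"
    have hU: "\<bar>EU - JU\<bar> \<le> KU * r N" using hyp[OF LU, of cU] by (simp add: EU_def JU_def KU_def)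
    have hcU: "continuous_on UNIV (\<lambda>x. T dd LU (x - cU))"
      by (intro continuous_on_compose2[OF T_cont[OF dd]] continuous_intros) auto
    have PU: "P \<le> EU" unfolding P_def EU_def
    proof (rule prob_le_int[OF assms(1) Smeas])
      show "{u+a<..<u+b} \<in> sets borel" by simp
      show "continuous_on UNIV (\<lambda>x. T dd LU (x - cU))" by (rule hcU)
      show "\<And>x. 0 \<le> T dd LU (x - cU) \<and> T dd LU (x - cU) \<le> 1" by (rule T_bounds[OF dd LU])
      fix x
      show "indicat_real {u+a<..<u+b} x \<le> T dd LU (x - cU)"
      proof (cases "x \<in> {u+a<..<u+b}")
        case True
        then have "T dd LU (x - cU) = 1" by (intro T_plateau[OF dd LU]) (auto simp: cU_def LU_def B_def)
        then show ?thesis by simp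
      qed (use T_bounds[OF dd LU] in auto)
    qed
    have JUb: "JU \<le> (B + 4*dd) / s * (g0 + Lam / s)"
    proof -
      have "JU \<le> (cU + LU + 2*dd - cU) / s * (gauss_dens sigma2 (u/s) + Lg sigma2 * W / s)"
        unfolding JU_def
      proof (rule gh_upper[OF v s hcU])
        show "\<And>x. 0 \<le> T dd LU (x - cU) \<and> T dd LU (x - cU) \<le> 1" by (rule T_bounds[OF dd LU])
        show "\<And>x. x \<notin> {cU..cU + LU + 2 * dd} \<Longrightarrow> T dd LU (x - cU) = 0"
          by (rule T_out[OF dd LU]) auto
        show "cU \<le> cU + LU + 2 * dd" using LU dd by simp
        show "\<forall>x\<in>{cU..cU + LU + 2 * dd}. \<bar>x - u\<bar> \<le> W"
          using Wbound by (auto simp: cU_def LU_def B_def)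
      qed
      then show ?thesis by (simp add: LU_def g0_def Lam_def add.commute)
    qed
    define cD where "cD = u + a"
    define ED where "ED = (LINT \<omega>|M. T dd LD (S \<omega> - cD))"
    define JD where "JD = (LINT z|lborel. gauss_dens sigma2 z * T dd LD (z * s - cD))"
    have hD: "\<bar>ED - JD\<bar> \<le> KD * r N" using hyp[OF LD, of cD] by (simp add: ED_def JD_def KD_def)
    have hcD: "continuous_on UNIV (\<lambda>x. T dd LD (x - cD))"
      by (intro continuous_on_compose2[OF T_cont[OF dd]] continuous_intros) auto
    have PD: "ED \<le> P" unfolding P_def ED_def
    proof (rule int_le_prob[OF assms(1) Smeas])
      show "{u+a<..<u+b} \<in> sets borel" by simp
      show "continuous_on UNIV (\<lambda>x. T dd LD (x - cD))" by (rule hcD)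
      show "\<And>x. 0 \<le> T dd LD (x - cD) \<and> T dd LD (x - cD) \<le> 1" by (rule T_bounds[OF dd LD])
      fix x
      show "T dd LD (x - cD) \<le> indicat_real {u+a<..<u+b} x"
      proof (cases "x \<in> {u+a<..<u+b}")
        case False
        then have "T dd LD (x - cD) = 0" by (intro T_out[OF dd LD]) (auto simp: cD_def LD_def B_def)
        then show ?thesis by simp
      qed (use T_bounds[OF dd LD] in auto)
    qed
    have JDb: "(B - 4*dd) / s * (g0 - Lam / s) \<le> JD"
    proof -
      have "(u + b - 2*dd - (u + a + 2*dd)) / s * (gauss_dens sigma2 (u/s) - Lg sigma2 * W / s) \<le> JD"
        unfolding JD_def
      proof (rule gh_lower[OF v s hcD])
        show "\<And>x. 0 \<le> T dd LD (x - cD) \<and> T dd LD (x - cD) \<le> 1" by (rule T_bounds[OF dd LD])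
        show "\<And>x. x \<notin> {cD..cD + LD + 2 * dd} \<Longrightarrow> T dd LD (x - cD) = 0"
          by (rule T_out[OF dd LD]) auto
        show "u + a + 2*dd \<le> u + b - 2*dd" using dd4 by (simp add: B_def)
        show "\<forall>x\<in>{u + a + 2*dd..u + b - 2*dd}. \<bar>x - u\<bar> \<le> W"
          using Wbound dd by auto
        show "\<And>x. x \<in> {u + a + 2*dd..u + b - 2*dd} \<Longrightarrow> T dd LD (x - cD) = 1"
          by (rule T_plateau[OF dd LD]) (auto simp: cD_def LD_def B_def)
      qed
      then show ?thesis by (simp add: B_def g0_def Lam_def algebra_simps)
    qed
    define rs where "rs = r N * s"
    have up: "s * P \<le> (B+4*dd)*(g0+Lam/s) + KU*rs"
    proof -
      have "s * P \<le> s * (JU + KU * r N)" using PU hU s by (intro mult_left_mono) auto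
      also have "\<dots> = s * JU + KU * rs" by (simp add: rs_def algebra_simps)
      also have "s * JU \<le> s * ((B + 4*dd) / s * (g0 + Lam / s))" using JUb s by (intro mult_left_mono) auto
      also have "s * ((B + 4*dd) / s * (g0 + Lam / s)) = (B+4*dd)*(g0+Lam/s)" using s by simp
      finally show ?thesis by simp
    qed
    have lo: "(B-4*dd)*(g0-Lam/s) - KD*rs \<le> s*P"
    proof -
      have "(B-4*dd)*(g0-Lam/s) = s * ((B - 4*dd) / s * (g0 - Lam / s))" using s by simp
      also have "\<dots> \<le> s * JD" using JDb s by (intro mult_left_mono) auto
      also have "\<dots> \<le> s * (ED + KD * r N)" using hD s by (intro mult_left_mono) auto
      also have "\<dots> = s * ED + KD * rs" by (simp add: rs_def algebra_simps)
      also have "s * ED \<le> s * P" using PD s by (intro mult_left_mono) auto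
      finally show ?thesis by simp
    qed
    have c2: "(B+4*dd)*Lam/s \<le> e*B/3"
    proof -
      define Q where "Q = (B+4*dd)*Lam"
      have Q: "Q \<ge> 0" using B dd Lam by (simp add: Q_def)
      have "1/s \<le> eps2" using h2 s by (simp add: s_def)
      then have "Q * (1/s) \<le> Q * eps2" using Q by (intro mult_left_mono) auto
      also have "\<dots> = (e*B/3) * (Q / (Q+1))" using Q by (simp add: eps2_def Q_def field_simps)
      also have "\<dots> \<le> (e*B/3) * 1" using Q e B by (intro mult_left_mono) auto
      finally show ?thesis by (simp add: Q_def)
    qed
    have c3: "\<bar>K*rs\<bar> \<le> e*B/3" if K: "\<bar>K\<bar> \<le> \<bar>KU\<bar>+\<bar>KD\<bar>" for K
    proof -
      have "\<bar>rs\<bar> \<le> eps1" using h1 by (simp add: rs_def s_def)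
      then have "\<bar>K*rs\<bar> \<le> (\<bar>KU\<bar>+\<bar>KD\<bar>+1) * eps1" unfolding abs_mult
        using K by (intro mult_mono) auto
      also have "\<dots> = e*B/3"
      proof -
        have "\<bar>KU\<bar>+\<bar>KD\<bar>+1 > 0" by (simp add: add_pos_nonneg)
        then show ?thesis unfolding eps1_def by (simp add: field_simps)
      qed
      finally show ?thesis .
    qed
    have "\<bar>s/B*P - g0\<bar> \<le> e"
      by (rule final_alg[OF B s dd dd4 g0 Lam up lo c1 c2 c3 c3]) auto
    then show "\<bar>sqrt (real N) / (b - a) * measure M {\<omega>\<in>space M. partial_sum X N \<omega> \<in> {u+a<..<u+b}}
            - exp (- (u^2) / (2 * real N * sigma2)) / sqrt (2 * pi * sigma2)\<bar> \<le> e"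
      by (simp add: s_def B_def P_def S_def g0eq)
  qed
qed

end
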